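(* Let $n\ge 1$ and write $[i,j]=\{i,i+1,\dots,j\}\subseteq[n]$ for $i\le j$. The rowmotion orbits on $\mathcal{IC}([n])$ are exactly: (a) the orbit $\{\emptyset,[n]\}$ of size $2$ (with $\mathrm{Row}(\emptyset)=[n]$, $\mathrm{Row}([n])=\emptyset$); (b) for each integer $k$ with $1\le k<\frac n2$ (there are $\lfloor\frac{n-1}{2}\rfloor$ of them), an orbit of size $n+2$, \[\{[1,k],[2,k+1],\dots,[n-k+1,n],[1,n-k],[2,n-k+1],\dots,[k+1,n]\},\] in which $\mathrm{Row}$ maps each listed set to the next one and $[k+1,n]$ back to $[1,k]$; concretely, $\mathrm{Row}([i,j])=[i+1,j+1]$ for $j<n$ and $\mathrm{Row}([i,n])=[1,i-1]$ for $i\ge 2$; (c) when $n$ is even, one further orbit $\{[1,\frac n2],[2,\frac n2+1],\dots,[\frac n2+1,n]\}$ of size $\frac{n+2}{2}$. Consequently the order of rowmotion on $\mathcal{IC}([n])$ divides $2(n+2)$ when $n$ is odd and divides $n+2$ when $n$ is even.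
   Context: $[n]$ denotes the chain poset $1<2<\cdots<n$. All posets are finite. For a poset $P$, a subset $I\subseteq P$ is interval-closed if for all $x,y\in I$ and $z\in P$ with $x\le z\le y$ we have $z\in I$; $\mathcal{IC}(P)$ is the set of interval-closed subsets of $P$. For $x\in P$ the toggle $t_x:\mathcal{IC}(P)\to\mathcal{IC}(P)$ is defined by $t_x(I)=I\triangle\{x\}$ if $I\triangle\{x\}\in\mathcal{IC}(P)$ and $t_x(I)=I$ otherwise. Rowmotion is $\mathrm{Row}=t_{x_1}\circ t_{x_2}\circ\cdots\circ t_{x_N}:\mathcal{IC}(P)\to\mathcal{IC}(P)$, where $(x_1,\dots,x_N)$ is a linear extension of $P$ (so elements are toggled from the top of the poset down). The order of rowmotion is the least common multiple of its orbit sizes. *)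

theory Defs
  imports Main
begin

definition interval_closed :: "'a set \<Rightarrow> ('a \<Rightarrow> 'a \<Rightarrow> bool) \<Rightarrow> 'a set \<Rightarrow> bool" where
  "interval_closed P le I \<longleftrightarrow>
     I \<subseteq> P \<and> (\<forall>x\<in>I. \<forall>y\<in>I. \<forall>z\<in>P. le x z \<and> le z y \<longrightarrow> z \<in> I)"

definition IC :: "'a set \<Rightarrow> ('a \<Rightarrow> 'a \<Rightarrow> bool) \<Rightarrow> 'a set set" where
  "IC P le = {I. interval_closed P le I}"

definition symdiff :: "'a set \<Rightarrow> 'a set \<Rightarrow> 'a set" where
  "symdiff A B = (A - B) \<union> (B - A)"

definition toggle :: "'a set \<Rightarrow> ('a \<Rightarrow> 'a \<Rightarrow> bool) \<Rightarrow> 'a \<Rightarrow> 'a set \<Rightarrow> 'a set" where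
  "toggle P le x I = (if interval_closed P le (symdiff I {x}) then symdiff I {x} else I)"

text \<open>Rowmotion w.r.t. a linear extension xs = [x1,...,xN]:
  Row = t_x1 o t_x2 o ... o t_xN (so x_N is toggled first).\<close>
definition rowmotion :: "'a set \<Rightarrow> ('a \<Rightarrow> 'a \<Rightarrow> bool) \<Rightarrow> 'a list \<Rightarrow> 'a set \<Rightarrow> 'a set" where
  "rowmotion P le xs = foldr (\<lambda>x f. toggle P le x \<circ> f) xs id"

definition chain_row :: "nat \<Rightarrow> nat set \<Rightarrow> nat set" where
  "chain_row n = rowmotion {1..n} (\<le>) [1..<n+1]"

definition orbit_of :: "('b \<Rightarrow> 'b) \<Rightarrow> 'b \<Rightarrow> 'b set" where
  "orbit_of f x = {(f ^^ m) x | m. True}"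

definition orbits :: "('b \<Rightarrow> 'b) \<Rightarrow> 'b set \<Rightarrow> 'b set set" where
  "orbits f S = orbit_of f ` S"

definition map_order :: "('b \<Rightarrow> 'b) \<Rightarrow> 'b set \<Rightarrow> nat" where
  "map_order f S = Lcm (card ` orbits f S)"

definition orbit_b :: "nat \<Rightarrow> nat \<Rightarrow> nat set set" where
  "orbit_b n k = {{i..i+k-1} | i. 1 \<le> i \<and> i + k - 1 \<le> n}
              \<union> {{i..i+(n-k)-1} | i. 1 \<le> i \<and> i + (n-k) - 1 \<le> n}"

definition orbit_c :: "nat \<Rightarrow> nat set set" where
  "orbit_c n = {{i..i + n div 2 - 1} | i. 1 \<le> i \<and> i + n div 2 - 1 \<le> n}"

end

theory Submission
  imports Defs
begin



abbreviation F :: "nat \<Rightarrow> nat list \<Rightarrow> nat set \<Rightarrow> nat set" where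
  "F n xs I \<equiv> foldr (toggle {1..n} (\<le>)) xs I"

lemma foldr_comp: "foldr (\<lambda>x f. toggle P le x \<circ> f) xs id I = foldr (toggle P le) xs I"
  by (induction xs arbitrary: I) auto

lemma row_eq: "chain_row n I = F n [1..<n+1] I"
  unfolding chain_row_def rowmotion_def by (simp add: foldr_comp)

lemma symdiff_single: "symdiff I {x} = (if x \<in> I then I - {x} else insert x I)"
  unfolding symdiff_def by auto

lemma ic_int: "(1::nat) \<le> a \<Longrightarrow> b \<le> n \<Longrightarrow> interval_closed {1..n} (\<le>) {a..b}"
  by (auto simp: interval_closed_def)

lemma not_ic: "x \<in> I \<Longrightarrow> y \<in> I \<Longrightarrow> z \<in> P \<Longrightarrow> le x z \<Longrightarrow> le z y \<Longrightarrow> z \<notin> I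
   \<Longrightarrow> \<not> interval_closed P le I"
  by (auto simp: interval_closed_def)

lemma t1: "1 \<le> (a::nat) \<Longrightarrow> a \<le> b \<Longrightarrow> b \<le> n \<Longrightarrow> toggle {1..n} (\<le>) b {a..b} = {a..b-1}"
proof -
  assume h: "1 \<le> a" "a \<le> b" "b \<le> n"
  have e: "symdiff {a..b} {b} = {a..b-1}" using h unfolding symdiff_def by auto
  show ?thesis unfolding toggle_def e using ic_int[of a "b-1" n] h by simp
qed

lemma t2: "1 \<le> (a::nat) \<Longrightarrow> a \<le> b \<Longrightarrow> b \<le> n \<Longrightarrow> toggle {1..n} (\<le>) a {a+1..b} = {a..b}"
proof -
  assume h: "1 \<le> a" "a \<le> b" "b \<le> n"
  have e: "symdiff {a+1..b} {a} = {a..b}" using h unfolding symdiff_def by auto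
  show ?thesis unfolding toggle_def e using ic_int[of a b n] h by simp
qed

lemma t3: "1 \<le> (i::nat) \<Longrightarrow> i \<le> j \<Longrightarrow> j < n \<Longrightarrow> toggle {1..n} (\<le>) (j+1) {i..j} = {i..j+1}"
proof -
  assume h: "1 \<le> i" "i \<le> j" "j < n"
  have e: "symdiff {i..j} {j+1} = {i..j+1}" using h unfolding symdiff_def by auto
  show ?thesis unfolding toggle_def e using ic_int[of i "j+1" n] h by simp
qed

lemma t6: "1 \<le> (i::nat) \<Longrightarrow> i \<le> j \<Longrightarrow> j < n \<Longrightarrow> toggle {1..n} (\<le>) i {i..j+1} = {i+1..j+1}"
proof -
  assume h: "1 \<le> i" "i \<le> j" "j < n"
  have e: "symdiff {i..j+1} {i} = {i+1..j+1}" using h unfolding symdiff_def by auto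
  show ?thesis unfolding toggle_def e using ic_int[of "i+1" "j+1" n] h by simp
qed

lemma t4: "1 \<le> (i::nat) \<Longrightarrow> i \<le> j \<Longrightarrow> j+1 < m \<Longrightarrow> m \<le> n \<Longrightarrow> toggle {1..n} (\<le>) m {i..j} = {i..j}"
proof -
  assume h: "1 \<le> i" "i \<le> j" "j+1 < m" "m \<le> n"
  have "\<not> interval_closed {1..n} (\<le>) (symdiff {i..j} {m})"
    by (rule not_ic[where x=i and y=m and z="j+1"]) (use h in \<open>auto simp: symdiff_single\<close>)
  thus ?thesis unfolding toggle_def by simp
qed

lemma t5: "1 \<le> (i::nat) \<Longrightarrow> i < m \<Longrightarrow> m < j \<Longrightarrow> j \<le> n \<Longrightarrow> toggle {1..n} (\<le>) m {i..j} = {i..j}"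
proof -
  assume h: "1 \<le> i" "i < m" "m < j" "j \<le> n"
  have "\<not> interval_closed {1..n} (\<le>) (symdiff {i..j} {m})"
    by (rule not_ic[where x=i and y=j and z=m]) (use h in \<open>auto simp: symdiff_single\<close>)
  thus ?thesis unfolding toggle_def by simp
qed

lemma t7: "1 \<le> (m::nat) \<Longrightarrow> m+1 < a \<Longrightarrow> a \<le> b \<Longrightarrow> b \<le> n \<Longrightarrow> toggle {1..n} (\<le>) m {a..b} = {a..b}"
proof -
  assume h: "1 \<le> m" "m+1 < a" "a \<le> b" "b \<le> n"
  have "\<not> interval_closed {1..n} (\<le>) (symdiff {a..b} {m})"
    by (rule not_ic[where x=m and y=a and z="m+1"]) (use h in \<open>auto simp: symdiff_single\<close>)
  thus ?thesis unfolding toggle_def by simp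
qed

lemma f_fix: "(\<forall>x\<in>set xs. toggle P le x I = I) \<Longrightarrow> foldr (toggle P le) xs I = I"
  by (induction xs) auto

lemma f_remove: assumes "1 \<le> i" "i \<le> m" "m \<le> n+1" shows "F n [m..<n+1] {i..n} = {i..m-1}"
  using assms(3,2)
proof (induction m rule: inc_induct)
  case base then show ?case by simp
next
  case (step k)
  have "F n [k..<n+1] {i..n} = toggle {1..n} (\<le>) k (F n [Suc k..<n+1] {i..n})"
    using step by (simp add: upt_conv_Cons del: upt_Suc)
  also have "\<dots> = toggle {1..n} (\<le>) k {i..k}" using step by simp
  also have "\<dots> = {i..k-1}" using step assms by (intro t1) auto
  finally show ?case .
qed

lemma f_add: assumes "1 \<le> m" "m \<le> i" "i \<le> n+1" shows "F n [m..<i] {} = {m..i-1}"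
  using assms(2,1)
proof (induction m rule: inc_induct)
  case base then show ?case by simp
next
  case (step k)
  have "F n [k..<i] {} = toggle {1..n} (\<le>) k (F n [Suc k..<i] {})"
    using step by (simp add: upt_conv_Cons del: upt_Suc)
  also have "\<dots> = toggle {1..n} (\<le>) k {k+1..i-1}" using step by simp
  also have "\<dots> = {k..i-1}" using step assms by (intro t2) auto
  finally show ?case .
qed

lemma upt_split: "a \<le> b \<Longrightarrow> b \<le> c \<Longrightarrow> [a..<c] = [a..<b] @ [b..<c]"
  using upt_add_eq_append[of a b "c-b"] by simp

lemma row_empty: "1 \<le> n \<Longrightarrow> chain_row n {} = {1..n}"
  unfolding row_eq using f_add[of 1 "n+1" n] by simp

lemma row_full: "1 \<le> n \<Longrightarrow> chain_row n {1..n} = {}"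
  unfolding row_eq using f_remove[of 1 1 n] by simp

lemma row_top: "2 \<le> i \<Longrightarrow> i \<le> n \<Longrightarrow> chain_row n {i..n} = {1..i-1}"
proof -
  assume h: "2 \<le> i" "i \<le> n"
  have "[1..<n+1] = [1..<i] @ [i..<n+1]" using h by (intro upt_split) auto
  hence "chain_row n {i..n} = F n [1..<i] (F n [i..<n+1] {i..n})" unfolding row_eq by simp
  also have "F n [i..<n+1] {i..n} = {}" using f_remove[of i i n] h by simp
  also have "F n [1..<i] {} = {1..i-1}" using f_add[of 1 i n] h by simp
  finally show ?thesis .
qed

lemma row_mid: "1 \<le> i \<Longrightarrow> i \<le> j \<Longrightarrow> j < n \<Longrightarrow> chain_row n {i..j} = {i+1..j+1}"
proof -
  assume h: "1 \<le> i" "i \<le> j" "j < n"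
  have "[1..<n+1] = [1..<i] @ [i] @ [i+1..<j+1] @ [j+1] @ [j+2..<n+1]"
  proof -
    have "[1..<n+1] = [1..<i] @ [i..<n+1]" using h by (intro upt_split) auto
    moreover have "[i..<n+1] = [i] @ [i+1..<n+1]" using h by (simp add: upt_conv_Cons)
    moreover have "[i+1..<n+1] = [i+1..<j+1] @ [j+1..<n+1]" using h by (intro upt_split) auto
    moreover have "[j+1..<n+1] = [j+1] @ [j+2..<n+1]" using h by (simp add: upt_conv_Cons)
    ultimately show ?thesis by simp
  qed
  hence "chain_row n {i..j} = F n [1..<i] (toggle {1..n} (\<le>) i (F n [i+1..<j+1]
           (toggle {1..n} (\<le>) (j+1) (F n [j+2..<n+1] {i..j}))))" unfolding row_eq by simp
  also have "F n [j+2..<n+1] {i..j} = {i..j}" proof (intro f_fix ballI)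
    fix x assume "x \<in> set [j+2..<n+1]"
    thus "toggle {1..n} (\<le>) x {i..j} = {i..j}" using h by (intro t4) auto
  qed
  also have "toggle {1..n} (\<le>) (j+1) {i..j} = {i..j+1}" using h by (rule t3)
  also have "F n [i+1..<j+1] {i..j+1} = {i..j+1}" proof (intro f_fix ballI)
    fix x assume "x \<in> set [i+1..<j+1]"
    thus "toggle {1..n} (\<le>) x {i..j+1} = {i..j+1}" using h by (intro t5) auto
  qed
  also have "toggle {1..n} (\<le>) i {i..j+1} = {i+1..j+1}" using h by (rule t6)
  also have "F n [1..<i] {i+1..j+1} = {i+1..j+1}" proof (intro f_fix ballI)
    fix x assume "x \<in> set [1..<i]"
    thus "toggle {1..n} (\<le>) x {i+1..j+1} = {i+1..j+1}" using h by (intro t7) auto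
  qed
  finally show ?thesis .
qed


definition J :: "nat \<Rightarrow> nat \<Rightarrow> nat set set" where
  "J n L = {{a..b} | a b. 1 \<le> a \<and> b \<le> n \<and> b + 1 = a + L}"

lemma J_eq: "1 \<le> L \<Longrightarrow> {{i..i+L-1} | i. 1 \<le> i \<and> i+L-1 \<le> n} = J n L"
proof
  assume L: "1 \<le> L"
  show "{{i..i+L-1} | i. 1 \<le> i \<and> i+L-1 \<le> n} \<subseteq> J n L"
  proof
    fix X assume "X \<in> {{i..i+L-1} | i. 1 \<le> i \<and> i+L-1 \<le> n}"
    then obtain i where "X = {i..i+L-1}" "1 \<le> i" "i+L-1 \<le> n" by blast
    thus "X \<in> J n L" unfolding J_def using L by (intro CollectI exI[of _ i] exI[of _ "i+L-1"]) auto
  qed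
  show "J n L \<subseteq> {{i..i+L-1} | i. 1 \<le> i \<and> i+L-1 \<le> n}"
  proof
    fix X assume "X \<in> J n L"
    then obtain a b where "X = {a..b}" "1 \<le> a" "b \<le> n" "b+1 = a+L" unfolding J_def by blast
    thus "X \<in> {{i..i+L-1} | i. 1 \<le> i \<and> i+L-1 \<le> n}" by (intro CollectI exI[of _ a]) auto
  qed
qed

lemma orbit_b_J: "1 \<le> k \<Longrightarrow> k < n \<Longrightarrow> orbit_b n k = J n k \<union> J n (n-k)"
  unfolding orbit_b_def using J_eq[of k n] J_eq[of "n-k" n] by simp

lemma orbit_c_J: "2 \<le> n \<Longrightarrow> orbit_c n = J n (n div 2)"
  unfolding orbit_c_def using J_eq[of "n div 2" n] by simp

lemma IC_eq: "IC {1..n} (\<le>) = insert {} {{a..b} | a b. 1 \<le> a \<and> a \<le> (b::nat) \<and> b \<le> n}"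
proof (intro equalityI subsetI)
  fix I assume "I \<in> IC {1..n} (\<le>)"
  hence ic: "interval_closed {1..n} (\<le>) I" by (simp add: IC_def)
  show "I \<in> insert {} {{a..b} | a b. 1 \<le> a \<and> a \<le> (b::nat) \<and> b \<le> n}"
  proof (cases "I = {}")
    case False
    have sub: "I \<subseteq> {1..n}" using ic by (simp add: interval_closed_def)
    hence fin: "finite I" using finite_subset by blast
    have mi: "Min I \<in> I" and ma: "Max I \<in> I" using fin False by auto
    have b1: "1 \<le> Min I" "Max I \<le> n" using subsetD[OF sub mi] subsetD[OF sub ma] by auto
    have cl: "\<And>z. z \<in> {1..n} \<Longrightarrow> Min I \<le> z \<Longrightarrow> z \<le> Max I \<Longrightarrow> z \<in> I"
      using ic mi ma unfolding interval_closed_def by blast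
    have "I = {Min I..Max I}"
    proof
      show "I \<subseteq> {Min I..Max I}" using fin by auto
      show "{Min I..Max I} \<subseteq> I"
      proof
        fix z assume z: "z \<in> {Min I..Max I}"
        hence "z \<in> {1..n}" using b1 by simp
        thus "z \<in> I" using cl z by simp
      qed
    qed
    moreover have "Min I \<le> Max I" using fin mi by simp
    ultimately show ?thesis using b1 by blast
  qed simp
next
  fix I assume "I \<in> insert {} {{a..b} | a b. 1 \<le> a \<and> a \<le> (b::nat) \<and> b \<le> n}"
  then consider "I = {}" | a b where "I = {a..b}" "1 \<le> a" "b \<le> n" by blast
  thus "I \<in> IC {1..n} (\<le>)"
  proof cases
    case 1 thus ?thesis unfolding IC_def interval_closed_def by simp
  next
    case 2 thus ?thesis unfolding IC_def using ic_int by simp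
  qed
qed

lemma orb_self: "x \<in> orbit_of f x"
  unfolding orbit_of_def by (auto intro: exI[of _ 0])

lemma orb_step: "y \<in> orbit_of f x \<Longrightarrow> f y \<in> orbit_of f x"
proof -
  assume "y \<in> orbit_of f x"
  then obtain m where "y = (f ^^ m) x" unfolding orbit_of_def by blast
  hence "f y = (f ^^ Suc m) x" by simp
  thus ?thesis unfolding orbit_of_def by blast
qed

lemma orb_trans: "y \<in> orbit_of f x \<Longrightarrow> z \<in> orbit_of f y \<Longrightarrow> z \<in> orbit_of f x"
proof -
  assume "y \<in> orbit_of f x" "z \<in> orbit_of f y"
  then obtain m k where "y = (f ^^ m) x" "z = (f ^^ k) y" unfolding orbit_of_def by blast
  hence "z = (f ^^ (k + m)) x" by (simp add: funpow_add)
  thus ?thesis unfolding orbit_of_def by blast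
qed

lemma orb_closed: "x \<in> S \<Longrightarrow> f ` S \<subseteq> S \<Longrightarrow> orbit_of f x \<subseteq> S"
proof
  fix y assume "x \<in> S" "f ` S \<subseteq> S" "y \<in> orbit_of f x"
  then obtain m where y: "y = (f ^^ m) x" unfolding orbit_of_def by auto
  have "(f ^^ m) x \<in> S" using \<open>x \<in> S\<close> \<open>f ` S \<subseteq> S\<close> by (induction m) auto
  thus "y \<in> S" using y by simp
qed

lemma shift: "1 \<le> a \<Longrightarrow> b + 1 = a + M \<Longrightarrow> 1 \<le> M \<Longrightarrow> b + d \<le> n
   \<Longrightarrow> {a+d..b+d} \<in> orbit_of (chain_row n) {a..b}"
proof (induction d)
  case 0 then show ?case using orb_self by simp
next
  case (Suc d)
  have "chain_row n {a+d..b+d} = {a+d+1..b+d+1}" using Suc.prems by (intro row_mid) auto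
  thus ?case using orb_step[OF Suc.IH] Suc.prems by simp
qed

lemma J_reach: assumes "1 \<le> M" "1 \<le> a" "b+1 = a+M" "b'+1 = a'+M" "b' \<le> n" "a \<le> a'"
  shows "{a'..b'} \<in> orbit_of (chain_row n) {a..b}"
proof -
  obtain d where d: "a' = a + d" using assms(6) le_Suc_ex by blast
  have b: "b' = b + d" using assms d by simp
  show ?thesis unfolding b d using shift[of a b M d n] assms d b by simp
qed




lemma inJ: "1 \<le> a \<Longrightarrow> b \<le> n \<Longrightarrow> b + 1 = a + L \<Longrightarrow> {a..b} \<in> J n L"
  unfolding J_def by blast

lemma step_J: assumes "1 \<le> M" "M < n" "1 \<le> a" "b+1 = a+M" "b \<le> n"
  shows "chain_row n {a..b} \<in> J n M \<union> J n (n-M)"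
proof (cases "b < n")
  case True
  hence "chain_row n {a..b} = {a+1..b+1}" using assms by (intro row_mid) auto
  thus ?thesis using assms True inJ[of "a+1" "b+1" n M] by simp
next
  case False
  hence "b = n" using assms by simp
  have "chain_row n {a..n} = {1..a-1}" using assms \<open>b = n\<close> by (intro row_top) auto
  hence "chain_row n {a..b} = {1..a-1}" using \<open>b = n\<close> by simp
  moreover have "a - 1 = n - M" using assms \<open>b = n\<close> by simp
  moreover have "{1..n-M} \<in> J n (n-M)" using assms by (intro inJ) auto
  ultimately show ?thesis by simp
qed

lemma closed_J: assumes "1 \<le> M" "M < n"
  shows "chain_row n ` (J n M \<union> J n (n-M)) \<subseteq> J n M \<union> J n (n-M)"
proof
  fix y assume "y \<in> chain_row n ` (J n M \<union> J n (n-M))"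
  then obtain X where X: "X \<in> J n M \<union> J n (n-M)" "y = chain_row n X" by blast
  from X(1) show "y \<in> J n M \<union> J n (n-M)"
  proof
    assume "X \<in> J n M"
    then obtain a b where "X = {a..b}" "1 \<le> a" "b \<le> n" "b+1 = a+M" unfolding J_def by blast
    thus ?thesis using X step_J[of M n a b] assms by simp
  next
    assume "X \<in> J n (n-M)"
    then obtain a b where "X = {a..b}" "1 \<le> a" "b \<le> n" "b+1 = a+(n-M)" unfolding J_def by blast
    moreover have "n - (n-M) = M" using assms by simp
    ultimately show ?thesis using X step_J[of "n-M" n a b] assms by auto
  qed
qed




lemma orb_J: assumes "1 \<le> M" "M < n" "1 \<le> a" "b+1 = a+M" "b \<le> n"
  shows "orbit_of (chain_row n) {a..b} = J n M \<union> J n (n-M)"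
proof
  have "{a..b} \<in> J n M" using assms by (intro inJ)
  hence "{a..b} \<in> J n M \<union> J n (n-M)" by blast
  thus "orbit_of (chain_row n) {a..b} \<subseteq> J n M \<union> J n (n-M)"
    using closed_J[OF assms(1,2)] by (rule orb_closed)
  let ?O = "orbit_of (chain_row n) {a..b}"
  have top: "{n+1-M..n} \<in> ?O" using assms by (intro J_reach[of M]) simp_all
  have "chain_row n {n+1-M..n} = {1..n+1-M-1}" using assms by (intro row_top) auto
  hence bot: "{1..n-M} \<in> ?O" using orb_step[OF top] by simp
  have A: "X \<in> ?O" if "X \<in> J n (n-M)" for X
  proof -
    from that obtain a' b' where X: "X = {a'..b'}" "1 \<le> a'" "b' \<le> n" "b'+1 = a'+(n-M)" unfolding J_def by blast
    have "{a'..b'} \<in> orbit_of (chain_row n) {1..n-M}" using X assms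
      by (intro J_reach[of "n-M"]) auto
    hence "{a'..b'} \<in> ?O" by (rule orb_trans[OF bot])
    thus ?thesis using X(1) by simp
  qed
  have top2: "{M+1..n} \<in> ?O" using assms by (intro A inJ) simp_all
  have "chain_row n {M+1..n} = {1..M+1-1}" using assms by (intro row_top) auto
  hence bot2: "{1..M} \<in> ?O" using orb_step[OF top2] by simp
  have B: "X \<in> ?O" if "X \<in> J n M" for X
  proof -
    from that obtain a' b' where X: "X = {a'..b'}" "1 \<le> a'" "b' \<le> n" "b'+1 = a'+M" unfolding J_def by blast
    have "{a'..b'} \<in> orbit_of (chain_row n) {1..M}" using X assms
      by (intro J_reach[of M]) auto
    hence "{a'..b'} \<in> ?O" by (rule orb_trans[OF bot2])
    thus ?thesis using X(1) by simp
  qed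
  show "J n M \<union> J n (n-M) \<subseteq> ?O" using A B by blast
qed

lemma orb_empty: assumes "1 \<le> n" shows "orbit_of (chain_row n) {} = {{}, {1..n}}"
proof
  have "chain_row n ` {{}, {1..n}} \<subseteq> {{}, {1..n}}" using row_empty[OF assms] row_full[OF assms] by simp
  thus "orbit_of (chain_row n) {} \<subseteq> {{}, {1..n}}" by (intro orb_closed) simp
  have "{1..n} \<in> orbit_of (chain_row n) {}" using orb_step[OF orb_self, of "chain_row n" "{}"] row_empty[OF assms] by simp
  thus "{{}, {1..n}} \<subseteq> orbit_of (chain_row n) {}" using orb_self[of "{}" "chain_row n"] by simp
qed

lemma orb_full: assumes "1 \<le> n" shows "orbit_of (chain_row n) {1..n} = {{}, {1..n}}"
proof
  have "chain_row n ` {{}, {1..n}} \<subseteq> {{}, {1..n}}" using row_empty[OF assms] row_full[OF assms] by simp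
  thus "orbit_of (chain_row n) {1..n} \<subseteq> {{}, {1..n}}" by (intro orb_closed) simp
  have "{} \<in> orbit_of (chain_row n) {1..n}" using orb_step[OF orb_self, of "chain_row n" "{1..n}"] row_full[OF assms] by simp
  thus "{{}, {1..n}} \<subseteq> orbit_of (chain_row n) {1..n}" using orb_self[of "{1..n}" "chain_row n"] by simp
qed



lemma J_img: "1 \<le> L \<Longrightarrow> L \<le> n \<Longrightarrow> J n L = (\<lambda>i. {i..i+L-1}) ` {1..n+1-L}"
proof -
  assume L: "1 \<le> L" "L \<le> n"
  have "J n L = {{i..i+L-1} | i. 1 \<le> i \<and> i+L-1 \<le> n}" using J_eq[OF L(1)] by simp
  also have "\<dots> = (\<lambda>i. {i..i+L-1}) ` {1..n+1-L}"
  proof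
    show "{{i..i+L-1} | i. 1 \<le> i \<and> i+L-1 \<le> n} \<subseteq> (\<lambda>i. {i..i+L-1}) ` {1..n+1-L}"
    proof
      fix X assume "X \<in> {{i..i+L-1} | i. 1 \<le> i \<and> i+L-1 \<le> n}"
      then obtain i where "X = {i..i+L-1}" "1 \<le> i" "i+L-1 \<le> n" by blast
      moreover have "i \<in> {1..n+1-L}" using calculation L by auto
      ultimately show "X \<in> (\<lambda>i. {i..i+L-1}) ` {1..n+1-L}" by blast
    qed
    show "(\<lambda>i. {i..i+L-1}) ` {1..n+1-L} \<subseteq> {{i..i+L-1} | i. 1 \<le> i \<and> i+L-1 \<le> n}"
    proof
      fix X assume "X \<in> (\<lambda>i. {i..i+L-1}) ` {1..n+1-L}"
      then obtain i where "X = {i..i+L-1}" "i \<in> {1..n+1-L}" by blast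
      moreover have "1 \<le> i \<and> i+L-1 \<le> n" using calculation L by auto
      ultimately show "X \<in> {{i..i+L-1} | i. 1 \<le> i \<and> i+L-1 \<le> n}" by blast
    qed
  qed
  finally show ?thesis .
qed

lemma card_J: assumes "1 \<le> L" "L \<le> n" shows "card (J n L) = n+1-L" "finite (J n L)"
proof -
  have inj: "inj_on (\<lambda>i. {i..i+L-1}) {1..n+1-L}"
  proof
    fix i j assume "i \<in> {1..n+1-L}" "j \<in> {1..n+1-L}" "{i..i+L-1} = {j..j+L-1}"
    moreover have "i \<in> {i..i+L-1}" "j \<in> {j..j+L-1}" using assms by auto
    ultimately have "i \<in> {j..j+L-1}" "j \<in> {i..i+L-1}" by auto
    thus "i = j" by simp
  qed
  show "card (J n L) = n+1-L" unfolding J_img[OF assms] using card_image[OF inj] by simp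
  show "finite (J n L)" unfolding J_img[OF assms] by simp
qed

lemma J_card_elem: "X \<in> J n L \<Longrightarrow> card X = L"
  unfolding J_def by auto

lemma J_disj: "L \<noteq> M \<Longrightarrow> J n L \<inter> J n M = {}"
  using J_card_elem by blast

lemma card_JJ: assumes "1 \<le> M" "M < n" "2 * M \<noteq> n"
  shows "card (J n M \<union> J n (n-M)) = n + 2"
proof -
  have "card (J n M \<union> J n (n-M)) = card (J n M) + card (J n (n-M))"
    using assms card_J[of M n] card_J[of "n-M" n] J_disj[of M "n-M" n]
    by (intro card_Un_disjoint) auto
  also have "\<dots> = n + 2" using assms card_J[of M n] card_J[of "n-M" n] by simp
  finally show ?thesis .
qed

lemma in_IC: "1 \<le> (a::nat) \<Longrightarrow> a \<le> b \<Longrightarrow> b \<le> n \<Longrightarrow> {a..b} \<in> IC {1..n} (\<le>)"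
  unfolding IC_eq by blast

lemma orbits_eq: assumes n: "1 \<le> n"
  shows "orbits (chain_row n) (IC {1..n} (\<le>)) =
        {{{}, {1..n}}} \<union> {orbit_b n k | k. 1 \<le> k \<and> 2 * k < n}
        \<union> (if even n then {orbit_c n} else {})"
    (is "?L = ?R")
proof
  show "?L \<subseteq> ?R"
  proof
    fix Y assume "Y \<in> ?L"
    then obtain x where x: "x \<in> IC {1..n} (\<le>)" "Y = orbit_of (chain_row n) x"
      unfolding orbits_def by blast
    from x(1) consider "x = {}" | a b where "x = {a..b}" "1 \<le> a" "a \<le> b" "b \<le> n"
      unfolding IC_eq by blast
    thus "Y \<in> ?R"
    proof cases
      case 1 thus ?thesis using x orb_empty[OF n] by simp
    next
      case 2
      define L where "L = b + 1 - a"
      show ?thesis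
      proof (cases "L = n")
        case True
        hence "a = 1" "b = n" using 2 L_def by auto
        thus ?thesis using x 2 orb_full[OF n] by simp
      next
        case False
        hence L: "1 \<le> L" "L < n" "b + 1 = a + L" using 2 L_def by auto
        have Y: "Y = J n L \<union> J n (n-L)" using x(2) 2 orb_J[OF L(1,2) 2(2) L(3) 2(4)] by simp
        consider "2 * L < n" | "2 * L > n" | "2 * L = n" by linarith
        thus ?thesis
        proof cases
          case 1
          hence "Y = orbit_b n L" using Y orbit_b_J[OF L(1,2)] by simp
          thus ?thesis using 1 L by blast
        next
          case 3
          hence "even n" "n div 2 = L" "n - L = L" "2 \<le> n" using L by auto
          hence "Y = orbit_c n" using Y orbit_c_J by simp
          thus ?thesis using \<open>even n\<close> by simp
        next
          case 2
          have k: "1 \<le> n - L" "n - L < n" "n - (n - L) = L" "2 * (n-L) < n" using L 2 by auto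
          hence "Y = orbit_b n (n-L)" using Y orbit_b_J[OF k(1,2)] by (simp add: Un_commute)
          thus ?thesis using k by blast
        qed
      qed
    qed
  qed
  show "?R \<subseteq> ?L"
  proof
    fix Y assume "Y \<in> ?R"
    then consider "Y = {{}, {1..n}}" | k where "Y = orbit_b n k" "1 \<le> k" "2 * k < n"
      | "even n" "Y = orbit_c n"
      by (auto split: if_splits)
    thus "Y \<in> ?L"
    proof cases
      case 1
      have "{} \<in> IC {1..n} (\<le>)" unfolding IC_eq by simp
      thus ?thesis unfolding orbits_def using 1 orb_empty[OF n] by (metis image_eqI)
    next
      case 2
      have "Y = orbit_of (chain_row n) {1..k}"
        using orb_J[of k n 1 k] orbit_b_J[of k n] 2 by simp
      moreover have "{1..k} \<in> IC {1..n} (\<le>)" using 2 by (intro in_IC) auto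
      ultimately show ?thesis unfolding orbits_def by blast
    next
      case 3
      have "2 \<le> n" using n 3 by presburger
      have h: "1 \<le> n div 2" "n div 2 < n" "n div 2 + 1 = 1 + n div 2" "n div 2 \<le> n"
        "n - n div 2 = n div 2" using \<open>2 \<le> n\<close> 3 by auto
      have "Y = orbit_of (chain_row n) {1..n div 2}"
        using orb_J[OF h(1,2) _ h(3,4)] orbit_c_J[OF \<open>2 \<le> n\<close>] 3 h(5) by simp
      moreover have "{1..n div 2} \<in> IC {1..n} (\<le>)" using h by (intro in_IC) auto
      ultimately show ?thesis unfolding orbits_def by blast
    qed
  qed
qed




theorem theorem3p2:
  fixes n :: nat
  assumes "n \<ge> 1"
  shows "chain_row n {} = {1..n} \<and> chain_row n {1..n} = {}
    \<and> (\<forall>i j. 1 \<le> i \<and> i \<le> j \<and> j < n \<longrightarrow> chain_row n {i..j} = {i+1..j+1})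
    \<and> (\<forall>i. 2 \<le> i \<and> i \<le> n \<longrightarrow> chain_row n {i..n} = {1..i-1})
    \<and> orbits (chain_row n) (IC {1..n} (\<le>)) =
        {{{}, {1..n}}} \<union> {orbit_b n k | k. 1 \<le> k \<and> 2 * k < n}
        \<union> (if even n then {orbit_c n} else {})
    \<and> card {{}, {1..n}} = 2
    \<and> card {k::nat. 1 \<le> k \<and> 2 * k < n} = (n - 1) div 2
    \<and> (\<forall>k. 1 \<le> k \<and> 2 * k < n \<longrightarrow> card (orbit_b n k) = n + 2)
    \<and> (even n \<longrightarrow> card (orbit_c n) = (n + 2) div 2)
    \<and> (odd n \<longrightarrow> map_order (chain_row n) (IC {1..n} (\<le>)) dvd 2 * (n + 2))
    \<and> (even n \<longrightarrow> map_order (chain_row n) (IC {1..n} (\<le>)) dvd n + 2)"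
proof -
  note n = assms
  have c2: "card {{}, {1..n}} = 2" using n by simp
  have ck: "card {k::nat. 1 \<le> k \<and> 2 * k < n} = (n - 1) div 2"
  proof -
    have "{k::nat. 1 \<le> k \<and> 2 * k < n} = {1..(n - 1) div 2}" by auto
    thus ?thesis by simp
  qed
  have cb: "\<forall>k. 1 \<le> k \<and> 2 * k < n \<longrightarrow> card (orbit_b n k) = n + 2"
  proof (intro allI impI)
    fix k assume k: "1 \<le> k \<and> 2 * k < n"
    thus "card (orbit_b n k) = n + 2" using orbit_b_J[of k n] card_JJ[of k n] by simp
  qed
  have cc: "even n \<longrightarrow> card (orbit_c n) = (n + 2) div 2"
  proof
    assume e: "even n"
    hence "2 \<le> n" using n by presburger
    hence "card (orbit_c n) = n + 1 - n div 2" using orbit_c_J card_J[of "n div 2" n] by simp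
    also have "\<dots> = (n + 2) div 2" using e by auto
    finally show "card (orbit_c n) = (n + 2) div 2" .
  qed
  have orb: "orbits (chain_row n) (IC {1..n} (\<le>)) =
        {{{}, {1..n}}} \<union> {orbit_b n k | k. 1 \<le> k \<and> 2 * k < n}
        \<union> (if even n then {orbit_c n} else {})" by (rule orbits_eq[OF n])
  have mo: "map_order (chain_row n) (IC {1..n} (\<le>)) dvd m"
    if h2: "2 dvd m" and hb: "n + 2 dvd m" and hc: "even n \<Longrightarrow> (n+2) div 2 dvd m" for m
    unfolding map_order_def
  proof (rule Lcm_least)
    fix c assume "c \<in> card ` orbits (chain_row n) (IC {1..n} (\<le>))"
    then obtain Y where Y: "Y \<in> orbits (chain_row n) (IC {1..n} (\<le>))" "c = card Y" by blast
    from Y(1)[unfolded orb] consider "Y = {{}, {1..n}}" | k where "Y = orbit_b n k" "1 \<le> k" "2 * k < n"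
      | "even n" "Y = orbit_c n"
      by (auto split: if_splits)
    thus "c dvd m"
    proof cases
      case 1 thus ?thesis using Y c2 h2 by simp
    next
      case 2 thus ?thesis using Y cb hb by simp
    next
      case 3 thus ?thesis using Y cc hc by simp
    qed
  qed
  have odd: "odd n \<longrightarrow> map_order (chain_row n) (IC {1..n} (\<le>)) dvd 2 * (n + 2)"
  proof (intro impI mo)
    show "n + 2 dvd 2 * (n + 2)" by (rule dvd_triv_right)
  qed auto
  have ev: "even n \<longrightarrow> map_order (chain_row n) (IC {1..n} (\<le>)) dvd n + 2"
  proof
    assume e: "even n"
    show "map_order (chain_row n) (IC {1..n} (\<le>)) dvd n + 2"
    proof (rule mo)
      show "2 dvd n + 2" using e by simp
      show "n + 2 dvd n + 2" by simp
      have "n + 2 = 2 * ((n + 2) div 2)" using e by simp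
      thus "(n + 2) div 2 dvd n + 2" by (metis dvd_triv_right)
    qed
  qed
  have mid: "\<forall>i j. 1 \<le> i \<and> i \<le> j \<and> j < n \<longrightarrow> chain_row n {i..j} = {i+1..j+1}"
    using row_mid by blast
  have top: "\<forall>i. 2 \<le> i \<and> i \<le> n \<longrightarrow> chain_row n {i..n} = {1..i-1}"
    using row_top by blast
  show ?thesis
    using row_empty[OF n] row_full[OF n] mid top orb c2 ck cb cc odd ev
    by (intro conjI)
qed


end
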